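(* Let $X=\{0,1\}$ and let $G_L$ be the group of automorphisms of the binary tree $X^*$ generated by $a,b$ defined by the wreath recursions $a=\psi_a(a,\mathbb 1)$, $b=\psi_b(b,a)$, where $\psi_a=(0\,1)$ and $\psi_b$ is the identity, i.e. $a(0w)=1a(w)$, $a(1w)=0w$, $b(0w)=0b(w)$, $b(1w)=1a(w)$. Let $\Gamma_n$ denote the Schreier graph of $G_L$ on $X^n$ with respect to $S=\{a,b,a^{-1},b^{-1}\}$. Then: (1) if $m>n\ge1$, the map $\pi:\Gamma_m\to\Gamma_n$, $\pi(x_1\cdots x_m)=x_1\cdots x_n$, is an unramified covering; (2) for every $n\ge1$, $\pi:\Gamma_{n+1}\to\Gamma_n$ is a normal (Galois) covering with Galois group $\mathrm{Gal}(\Gamma_{n+1}|\Gamma_n)\cong\mathbb Z/2\mathbb Z$.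
   Context: Schreier graph $\Gamma_n$: vertex set $X^n$; for every $v\in X^n$ and $s\in S$ an edge joining $v$ and $s(v)$ (the edge from $s$ at $v$ identified with the one from $s^{-1}$ at $s(v)$), so $\Gamma_n$ is a $4$-regular multigraph with loops allowed. A surjective graph map $\pi:\widetilde Y\to Y$ is an unramified covering if for every vertex $u$ of $Y$ and $v\in\pi^{-1}(u)$ it maps the neighbours of $v$ bijectively onto the neighbours of $u$; it is $d$-sheeted if fibres have size $d$, and normal (Galois) if there are $d$ graph automorphisms $\sigma$ of $\widetilde Y$ with $\pi\circ\sigma=\pi$, forming the Galois group. *)

theory Defs
  imports Main "HOL-Library.FuncSet" "HOL-Algebra.Elementary_Groups"
begin

text \<open>A multigraph is given by a vertex set, a set of darts (oriented half-edges),
  the source map and the orientation-reversing involution; an edge is a pair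
  of mutually reverse darts.  The neighbours of a vertex are counted via the
  darts starting there (so a loop contributes twice, as in a 4-regular graph).\<close>

record ('v, 'd) mgraph =
  gverts :: "'v set"
  gdarts :: "'d set"
  gsrc   :: "'d \<Rightarrow> 'v"
  grev   :: "'d \<Rightarrow> 'd"

definition star :: "('v, 'd) mgraph \<Rightarrow> 'v \<Rightarrow> 'd set" where
  "star G v = {d \<in> gdarts G. gsrc G d = v}"

definition graph_map ::
  "('v, 'd) mgraph \<Rightarrow> ('w, 'e) mgraph \<Rightarrow> ('v \<Rightarrow> 'w) \<Rightarrow> ('d \<Rightarrow> 'e) \<Rightarrow> bool" where
  "graph_map G H f g \<longleftrightarrow>
     f \<in> gverts G \<rightarrow> gverts H \<and> g \<in> gdarts G \<rightarrow> gdarts H \<and>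
     (\<forall>d \<in> gdarts G. gsrc H (g d) = f (gsrc G d) \<and> grev H (g d) = g (grev G d))"

definition unramified_covering ::
  "('v, 'd) mgraph \<Rightarrow> ('w, 'e) mgraph \<Rightarrow> ('v \<Rightarrow> 'w) \<Rightarrow> ('d \<Rightarrow> 'e) \<Rightarrow> bool" where
  "unramified_covering G H f g \<longleftrightarrow>
     graph_map G H f g \<and> f ` gverts G = gverts H \<and> g ` gdarts G = gdarts H \<and>
     (\<forall>v \<in> gverts G. bij_betw g (star G v) (star H (f v)))"

definition sheeted ::
  "nat \<Rightarrow> ('v, 'd) mgraph \<Rightarrow> ('w, 'e) mgraph \<Rightarrow> ('v \<Rightarrow> 'w) \<Rightarrow> bool" where
  "sheeted k G H f \<longleftrightarrow> (\<forall>u \<in> gverts H. card {v \<in> gverts G. f v = u} = k)"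

definition deck_transformations ::
  "('v, 'd) mgraph \<Rightarrow> ('v \<Rightarrow> 'w) \<Rightarrow> ('d \<Rightarrow> 'e) \<Rightarrow> (('v \<Rightarrow> 'v) \<times> ('d \<Rightarrow> 'd)) set" where
  "deck_transformations G f g =
     {(\<sigma>, \<tau>). \<sigma> \<in> extensional (gverts G) \<and> \<tau> \<in> extensional (gdarts G) \<and>
        bij_betw \<sigma> (gverts G) (gverts G) \<and> bij_betw \<tau> (gdarts G) (gdarts G) \<and>
        graph_map G G \<sigma> \<tau> \<and>
        (\<forall>v \<in> gverts G. f (\<sigma> v) = f v) \<and> (\<forall>d \<in> gdarts G. g (\<tau> d) = g d)}"

definition galois_group ::
  "('v, 'd) mgraph \<Rightarrow> ('v \<Rightarrow> 'w) \<Rightarrow> ('d \<Rightarrow> 'e) \<Rightarrow> (('v \<Rightarrow> 'v) \<times> ('d \<Rightarrow> 'd)) monoid" where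
  "galois_group G f g =
     \<lparr> carrier = deck_transformations G f g,
       mult = (\<lambda>(\<sigma>, \<tau>) (\<sigma>', \<tau>'). (compose (gverts G) \<sigma> \<sigma>', compose (gdarts G) \<tau> \<tau>')),
       one = (restrict id (gverts G), restrict id (gdarts G)) \<rparr>"

definition normal_covering ::
  "nat \<Rightarrow> ('v, 'd) mgraph \<Rightarrow> ('w, 'e) mgraph \<Rightarrow> ('v \<Rightarrow> 'w) \<Rightarrow> ('d \<Rightarrow> 'e) \<Rightarrow> bool" where
  "normal_covering k G H f g \<longleftrightarrow>
     unramified_covering G H f g \<and> sheeted k G H f \<and> card (deck_transformations G f g) = k"

text \<open>Letters: \<open>False\<close> = 0, \<open>True\<close> = 1.\<close>

fun act_a :: "bool list \<Rightarrow> bool list" where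
  "act_a [] = []"
| "act_a (False # w) = True # act_a w"
| "act_a (True # w) = False # w"

fun act_b :: "bool list \<Rightarrow> bool list" where
  "act_b [] = []"
| "act_b (False # w) = False # act_b w"
| "act_b (True # w) = True # act_a w"

datatype gen = Ga | Gb

fun act :: "gen \<Rightarrow> bool list \<Rightarrow> bool list" where
  "act Ga w = act_a w"
| "act Gb w = act_b w"

text \<open>Schreier graph \<open>\<Gamma>_n\<close>: one edge \<open>(v,s)\<close> joining \<open>v\<close> and \<open>s(v)\<close> for each
  \<open>v \<in> X^n\<close>, \<open>s \<in> {a,b}\<close> (this edge is also the edge from \<open>s\<^sup>-\<^sup>1\<close> at \<open>s(v)\<close>).\<close>
definition schreier :: "nat \<Rightarrow> (bool list, (bool list \<times> gen) \<times> bool) mgraph" where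
  "schreier n =
     \<lparr> gverts = {w. length w = n},
       gdarts = {((w, s), b). length w = n},
       gsrc = (\<lambda>((w, s), b). if b then w else act s w),
       grev = (\<lambda>((w, s), b). ((w, s), \<not> b)) \<rparr>"

definition proj_v :: "nat \<Rightarrow> bool list \<Rightarrow> bool list" where
  "proj_v n w = take n w"

definition proj_d :: "nat \<Rightarrow> (bool list \<times> gen) \<times> bool \<Rightarrow> (bool list \<times> gen) \<times> bool" where
  "proj_d n = (\<lambda>((w, s), b). ((take n w, s), b))"

end

theory Submission
  imports Defs
begin

lemma len_act_a[simp]: "length (act_a w) = length w"
  by (induction w rule: act_a.induct) auto
lemma len_act_b[simp]: "length (act_b w) = length w"
  by (induction w rule: act_b.induct) auto
lemma len_act[simp]: "length (act s w) = length w"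
  by (cases s) auto

lemma take_act_a: "take n (act_a w) = act_a (take n w)"
  by (induction w arbitrary: n rule: act_a.induct) (auto simp: take_Cons split: nat.splits)
lemma take_act_b: "take n (act_b w) = act_b (take n w)"
  by (induction w arbitrary: n rule: act_b.induct) (auto simp: take_Cons take_act_a split: nat.splits)
lemma take_act: "take n (act s w) = act s (take n w)"
  by (cases s) (auto simp: take_act_a take_act_b)

fun ia :: "bool list \<Rightarrow> bool list" where
  "ia [] = []" | "ia (True # w) = False # ia w" | "ia (False # w) = True # w"
fun ib :: "bool list \<Rightarrow> bool list" where
  "ib [] = []" | "ib (False # w) = False # ib w" | "ib (True # w) = True # ia w"
fun inv_act :: "gen \<Rightarrow> bool list \<Rightarrow> bool list" where
  "inv_act Ga w = ia w" | "inv_act Gb w = ib w"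

lemma ia1[simp]: "act_a (ia w) = w" by (induction w rule: ia.induct) auto
lemma ia2[simp]: "ia (act_a w) = w" by (induction w rule: act_a.induct) auto
lemma ia3[simp]: "length (ia w) = length w" by (induction w rule: ia.induct) auto
lemma ib1[simp]: "act_b (ib w) = w" by (induction w rule: ib.induct) auto
lemma ib2[simp]: "ib (act_b w) = w" by (induction w rule: act_b.induct) auto
lemma ib3[simp]: "length (ib w) = length w" by (induction w rule: ib.induct) auto
lemma inv1[simp]: "act s (inv_act s w) = w" by (cases s) auto
lemma inv2[simp]: "inv_act s (act s w) = w" by (cases s) auto
lemma inv3[simp]: "length (inv_act s w) = length w" by (cases s) auto
lemma act_inj: "act s w = act s w' \<Longrightarrow> w = w'" by (metis inv2)

definition flipl :: "bool list \<Rightarrow> bool list" where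
  "flipl w = butlast w @ [\<not> last w]"

lemma flipl_snoc[simp]: "flipl (p @ [x]) = p @ [\<not> x]" by (simp add: flipl_def)
lemma flipl_len[simp]: "w \<noteq> [] \<Longrightarrow> length (flipl w) = length w" by (simp add: flipl_def)
lemma flipl_flipl[simp]: "w \<noteq> [] \<Longrightarrow> flipl (flipl w) = w" by (simp add: flipl_def)
lemma flipl_len'[simp]: "length w = Suc k \<Longrightarrow> length (flipl w) = Suc k" by (simp add: flipl_def)
lemma flipl_flipl'[simp]: "length w = Suc k \<Longrightarrow> flipl (flipl w) = w"
  by (metis flipl_flipl list.size(3) nat.simps(3))
lemma flipl_neq: "w \<noteq> [] \<Longrightarrow> flipl w \<noteq> w"
  by (metis flipl_def last_snoc)
lemma take_flipl: "length w = Suc n \<Longrightarrow> take n (flipl w) = take n w"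
  by (simp add: flipl_def butlast_conv_take)

lemma act_a_single[simp]: "act_a [x] = [\<not> x]" by (cases x) auto
lemma act_b_single[simp]: "act_b [x] = [x]" by (cases x) auto

lemma act_a_snoc: "\<exists>c. \<forall>x. act_a (p @ [x]) = act_a p @ [c \<noteq> x]"
proof (induction p rule: act_a.induct)
  case 1 show ?case by (intro exI[of _ True]) simp
next
  case (2 w) then show ?case by auto
next
  case (3 w) show ?case by (intro exI[of _ False]) simp
qed

lemma act_b_snoc: "\<exists>c. \<forall>x. act_b (p @ [x]) = act_b p @ [c \<noteq> x]"
proof (induction p rule: act_b.induct)
  case 1 show ?case by (intro exI[of _ False]) simp
next
  case (2 w) then show ?case by auto
next
  case (3 w) then show ?case using act_a_snoc[of w] by auto
qed

lemma act_snoc: "\<exists>c. \<forall>x. act s (p @ [x]) = act s p @ [c \<noteq> x]"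
  using act_a_snoc act_b_snoc by (cases s) auto

lemma act_flipl: "w \<noteq> [] \<Longrightarrow> act s (flipl w) = flipl (act s w)"
proof -
  assume "w \<noteq> []"
  then obtain p x where w: "w = p @ [x]" by (metis rev_exhaust)
  obtain c where c: "\<forall>x. act s (p @ [x]) = act s p @ [c \<noteq> x]" using act_snoc by blast
  show ?thesis using c unfolding w by simp
qed

lemma act_flipl': "length w = Suc k \<Longrightarrow> act s (flipl w) = flipl (act s w)"
  by (metis act_flipl list.size(3) nat.simps(3))

lemma aa: "act_a (act_a (x # w)) = x # act_a w" by (cases x) auto

lemma aa_pow: "(act_a ^^ (2*k)) (x # w) = x # (act_a ^^ k) w"
proof (induction k)
  case 0 then show ?case by simp
next
  case (Suc k)
  have "(act_a ^^ (2 * Suc k)) (x # w) = act_a (act_a ((act_a ^^ (2*k)) (x # w)))"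
    by (simp add: mult_Suc_right)
  also have "\<dots> = x # (act_a ^^ Suc k) w" using Suc by (simp add: aa)
  finally show ?case .
qed

lemma len_pow[simp]: "length ((act_a ^^ k) w) = length w"
  by (induction k) auto

lemma trans_a_aux: "\<forall>w w'. length w = n \<and> length w' = n \<longrightarrow> (\<exists>k. (act_a ^^ k) w = w')"
proof (induction n)
  case 0 then show ?case by (auto intro: exI[of _ 0])
next
  case (Suc n)
  show ?case
  proof (intro allI impI)
    fix w w' :: "bool list" assume h: "length w = Suc n \<and> length w' = Suc n"
    then obtain x w0 y u where w: "w = x # w0" and w': "w' = y # u"
      and l: "length w0 = n" "length u = n"
      by (metis length_Suc_conv)
    show "\<exists>k. (act_a ^^ k) w = w'"
    proof (cases "x = y")
      case True
      obtain k where "(act_a ^^ k) w0 = u" using Suc l by blast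
      then have "(act_a ^^ (2*k)) w = w'" using True w w' aa_pow by simp
      then show ?thesis by blast
    next
      case False
      obtain u0 where u0: "act_a w = y # u0" "length u0 = n"
        using False w l by (cases x) auto
      obtain k where "(act_a ^^ k) u0 = u" using Suc l u0 by blast
      then have "(act_a ^^ (2*k)) (act_a w) = w'" using u0 w' aa_pow by simp
      then have "(act_a ^^ (Suc (2*k))) w = w'" by (simp add: funpow_Suc_right del: funpow.simps)
      then show ?thesis by blast
    qed
  qed
qed

lemma trans_a: "length w = length w' \<Longrightarrow> \<exists>k. (act_a ^^ k) w = w'"
  using trans_a_aux by blast


lemma covering:
  assumes nm: "n \<le> m"
  shows "unramified_covering (schreier m) (schreier n) (proj_v n) (proj_d n)"
proof -
  let ?G = "schreier m" and ?H = "schreier n"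
  have gm: "graph_map ?G ?H (proj_v n) (proj_d n)"
    unfolding graph_map_def schreier_def proj_v_def proj_d_def using nm
    by (auto simp: take_act)
  have v: "proj_v n ` gverts ?G = gverts ?H"
  proof
    show "proj_v n ` gverts ?G \<subseteq> gverts ?H" using nm by (auto simp: schreier_def proj_v_def)
    show "gverts ?H \<subseteq> proj_v n ` gverts ?G"
    proof
      fix u assume "u \<in> gverts ?H"
      then have "length u = n" by (simp add: schreier_def)
      then have "u = proj_v n (u @ replicate (m - n) False)" "u @ replicate (m - n) False \<in> gverts ?G"
        using nm by (auto simp: proj_v_def schreier_def)
      then show "u \<in> proj_v n ` gverts ?G" by blast
    qed
  qed
  have d: "proj_d n ` gdarts ?G = gdarts ?H"
  proof
    show "proj_d n ` gdarts ?G \<subseteq> gdarts ?H" using nm by (auto simp: schreier_def proj_d_def)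
    show "gdarts ?H \<subseteq> proj_d n ` gdarts ?G"
    proof
      fix e assume e: "e \<in> gdarts ?H"
      obtain u s b where eq: "e = ((u, s), b)" by (metis prod.exhaust)
      then have "length u = n" using e by (simp add: schreier_def)
      then have "e = proj_d n ((u @ replicate (m - n) False, s), b)"
        "((u @ replicate (m - n) False, s), b) \<in> gdarts ?G"
        using nm eq by (auto simp: proj_d_def schreier_def)
      then show "e \<in> proj_d n ` gdarts ?G" by blast
    qed
  qed
  have st: "bij_betw (proj_d n) (star ?G v) (star ?H (proj_v n v))" if vG: "v \<in> gverts ?G" for v
  proof -
    have lv: "length v = m" using vG by (simp add: schreier_def)
    have inj: "inj_on (proj_d n) (star ?G v)"
    proof (rule inj_onI)
      fix d1 d2 assume d1: "d1 \<in> star ?G v" and d2: "d2 \<in> star ?G v"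
        and eq: "proj_d n d1 = proj_d n d2"
      obtain w1 s1 b1 where e1: "d1 = ((w1, s1), b1)" by (metis prod.exhaust)
      obtain w2 s2 b2 where e2: "d2 = ((w2, s2), b2)" by (metis prod.exhaust)
      have "s1 = s2" "b1 = b2" using eq e1 e2 by (auto simp: proj_d_def)
      moreover have "(if b1 then w1 else act s1 w1) = v" "(if b2 then w2 else act s2 w2) = v"
        using d1 d2 e1 e2 by (auto simp: star_def schreier_def)
      ultimately have "w1 = w2" by (cases b1) (auto dest: act_inj)
      then show "d1 = d2" using e1 e2 \<open>s1 = s2\<close> \<open>b1 = b2\<close> by simp
    qed
    have img: "proj_d n ` star ?G v = star ?H (proj_v n v)"
    proof
      show "proj_d n ` star ?G v \<subseteq> star ?H (proj_v n v)"
        using nm by (auto simp: star_def schreier_def proj_d_def proj_v_def take_act)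
      show "star ?H (proj_v n v) \<subseteq> proj_d n ` star ?G v"
      proof
        fix e assume e: "e \<in> star ?H (proj_v n v)"
        obtain u s b where eq: "e = ((u, s), b)" by (metis prod.exhaust)
        have lu: "length u = n" and src: "(if b then u else act s u) = take n v"
          using e eq by (auto simp: star_def schreier_def proj_v_def)
        show "e \<in> proj_d n ` star ?G v"
        proof (cases b)
          case True
          then have "e = proj_d n ((v, s), True)" "((v, s), True) \<in> star ?G v"
            using eq src lv by (auto simp: proj_d_def star_def schreier_def)
          then show ?thesis by blast
        next
          case False
          let ?w = "inv_act s v"
          have "act s (take n ?w) = act s u"
            using src False by (simp add: take_act[symmetric])
          then have tw: "take n ?w = u" by (rule act_inj)
          have "e = proj_d n ((?w, s), False)" "((?w, s), False) \<in> star ?G v"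
            using eq tw False lv by (auto simp: proj_d_def star_def schreier_def)
          then show ?thesis by blast
        qed
      qed
    qed
    show ?thesis using inj img by (simp add: bij_betw_def)
  qed
  show ?thesis unfolding unramified_covering_def using gm v d st by blast
qed


definition fd :: "(bool list \<times> gen) \<times> bool \<Rightarrow> (bool list \<times> gen) \<times> bool" where
  "fd = (\<lambda>((w, s), b). ((flipl w, s), b))"

definition D0 :: "nat \<Rightarrow> _" where
  "D0 n = (restrict id (gverts (schreier (Suc n))), restrict id (gdarts (schreier (Suc n))))"
definition D1 :: "nat \<Rightarrow> _" where
  "D1 n = (restrict flipl (gverts (schreier (Suc n))), restrict fd (gdarts (schreier (Suc n))))"

lemma verts_S[simp]: "gverts (schreier k) = {w. length w = k}" by (simp add: schreier_def)
lemma darts_S[simp]: "gdarts (schreier k) = {((w, s), b). length w = k}" by (simp add: schreier_def)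
lemma src_S[simp]: "gsrc (schreier k) ((w, s), b) = (if b then w else act s w)" by (simp add: schreier_def)
lemma rev_S[simp]: "grev (schreier k) ((w, s), b) = ((w, s), \<not> b)" by (simp add: schreier_def)
lemma fd_simp[simp]: "fd ((w, s), b) = ((flipl w, s), b)" by (simp add: fd_def)
lemma projd_simp[simp]: "proj_d n ((w, s), b) = ((take n w, s), b)" by (simp add: proj_d_def)

lemma fiber: "length v = Suc n \<Longrightarrow> length v' = Suc n \<Longrightarrow> take n v' = take n v \<Longrightarrow> v' = v \<or> v' = flipl v"
proof -
  assume l: "length v = Suc n" "length v' = Suc n" and t: "take n v' = take n v"
  have "v = take n v @ [last v]" using l by (metis append_butlast_last_id butlast_conv_take diff_Suc_1 list.size(3) nat.simps(3))
  moreover have "v' = take n v @ [last v']" using l t by (metis append_butlast_last_id butlast_conv_take diff_Suc_1 list.size(3) nat.simps(3))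
  ultimately show ?thesis
  proof (cases "last v' = last v")
    case False
    then have "last v' = (\<not> last v)" by auto
    with \<open>v' = take n v @ [last v']\<close> have "v' = flipl (take n v @ [last v])" by simp
    with \<open>v = take n v @ [last v]\<close> show ?thesis by metis
  qed simp
qed

lemma D0_in: "D0 n \<in> deck_transformations (schreier (Suc n)) (proj_v n) (proj_d n)"
  unfolding D0_def deck_transformations_def graph_map_def
  by (auto simp: bij_betw_def inj_on_def proj_v_def)

lemma D1_in: "D1 n \<in> deck_transformations (schreier (Suc n)) (proj_v n) (proj_d n)"
proof -
  let ?V = "{w::bool list. length w = Suc n}"
  let ?D = "{((w, s), b). length (w::bool list) = Suc n} :: ((bool list \<times> gen) \<times> bool) set"
  have nz: "w \<in> ?V \<Longrightarrow> w \<noteq> []" for w by auto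
  have b1: "bij_betw (restrict flipl ?V) ?V ?V"
    by (rule bij_betw_byWitness[where f' = flipl]) (auto simp del: length_greater_0_conv)
  have b2: "bij_betw (restrict fd ?D) ?D ?D"
    by (rule bij_betw_byWitness[where f' = fd]) (auto simp del: length_greater_0_conv)
  have gm: "graph_map (schreier (Suc n)) (schreier (Suc n)) (restrict flipl ?V) (restrict fd ?D)"
    unfolding graph_map_def by (auto simp: act_flipl' simp del: length_greater_0_conv)
  show ?thesis unfolding D1_def deck_transformations_def using b1 b2 gm
    by (auto simp: proj_v_def take_flipl)
qed


lemma deck_sub:
  assumes mem: "(\<sigma>, \<tau>) \<in> deck_transformations (schreier (Suc n)) (proj_v n) (proj_d n)"
  shows "(\<sigma>, \<tau>) = D0 n \<or> (\<sigma>, \<tau>) = D1 n"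
proof -
  let ?G = "schreier (Suc n)"
  let ?V = "{w::bool list. length w = Suc n}"
  let ?D = "{((w, s), b). length (w::bool list) = Suc n} :: ((bool list \<times> gen) \<times> bool) set"
  have es: "\<sigma> \<in> extensional ?V" and et: "\<tau> \<in> extensional ?D"
    and sV: "\<And>v. v \<in> ?V \<Longrightarrow> \<sigma> v \<in> ?V" and tD: "\<And>d. d \<in> ?D \<Longrightarrow> \<tau> d \<in> ?D"
    and sr: "\<And>d. d \<in> ?D \<Longrightarrow> gsrc ?G (\<tau> d) = \<sigma> (gsrc ?G d) \<and> grev ?G (\<tau> d) = \<tau> (grev ?G d)"
    and pv: "\<And>v. v \<in> ?V \<Longrightarrow> take n (\<sigma> v) = take n v"
    and pd: "\<And>d. d \<in> ?D \<Longrightarrow> proj_d n (\<tau> d) = proj_d n d"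
  proof -
    have H: "\<sigma> \<in> extensional (gverts ?G) \<and> \<tau> \<in> extensional (gdarts ?G) \<and>
      \<sigma> \<in> gverts ?G \<rightarrow> gverts ?G \<and> \<tau> \<in> gdarts ?G \<rightarrow> gdarts ?G \<and>
      (\<forall>d \<in> gdarts ?G. gsrc ?G (\<tau> d) = \<sigma> (gsrc ?G d) \<and> grev ?G (\<tau> d) = \<tau> (grev ?G d)) \<and>
      (\<forall>v \<in> gverts ?G. proj_v n (\<sigma> v) = proj_v n v) \<and> (\<forall>d \<in> gdarts ?G. proj_d n (\<tau> d) = proj_d n d)"
      using mem unfolding deck_transformations_def graph_map_def by blast
    show "\<sigma> \<in> extensional ?V" "\<tau> \<in> extensional ?D" using H by simp_all
    show "\<And>v. v \<in> ?V \<Longrightarrow> \<sigma> v \<in> ?V" using H by (simp only: verts_S Pi_iff) (blast?)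
    show "\<And>d. d \<in> ?D \<Longrightarrow> \<tau> d \<in> ?D" using H by (simp only: darts_S Pi_iff) (blast?)
    show "\<And>d. d \<in> ?D \<Longrightarrow> gsrc ?G (\<tau> d) = \<sigma> (gsrc ?G d) \<and> grev ?G (\<tau> d) = \<tau> (grev ?G d)"
      using H by (simp only: darts_S Pi_iff) (blast?)
    show "\<And>v. v \<in> ?V \<Longrightarrow> take n (\<sigma> v) = take n v" using H by (simp only: verts_S proj_v_def) (blast?)
    show "\<And>d. d \<in> ?D \<Longrightarrow> proj_d n (\<tau> d) = proj_d n d" using H by (simp only: darts_S Pi_iff) (blast?)
  qed
  have tT: "\<tau> ((w, s), True) = ((\<sigma> w, s), True)" if l: "length w = Suc n" for w s
  proof -
    have dD: "((w, s), True) \<in> ?D" using l by simp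
    obtain w' s' b' where e: "\<tau> ((w, s), True) = ((w', s'), b')" by (metis prod.exhaust)
    have "s' = s" "b' = True" using pd[OF dD] e by auto
    moreover have "w' = \<sigma> w" using sr[OF dD] e \<open>b' = True\<close> by simp
    ultimately show ?thesis using e by simp
  qed
  have tF: "\<tau> ((w, s), False) = ((\<sigma> w, s), False)" if l: "length w = Suc n" for w s
  proof -
    have dD: "((w, s), True) \<in> ?D" using l by simp
    have "grev ?G (\<tau> ((w, s), True)) = \<tau> ((w, s), False)" using sr[OF dD] by simp
    then show ?thesis using tT[OF l] by simp
  qed
  have comm: "\<sigma> (act s w) = act s (\<sigma> w)" if l: "length w = Suc n" for w s
  proof -
    have dD: "((w, s), False) \<in> ?D" using l by simp
    show ?thesis using sr[OF dD] tF[OF l] by simp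
  qed
  have fib: "\<sigma> v = v \<or> \<sigma> v = flipl v" if l: "length v = Suc n" for v
    using fiber[OF l, of "\<sigma> v"] sV[of v] pv[of v] l by simp
  have step: "(\<sigma> (act_a v) = act_a v) \<longleftrightarrow> (\<sigma> v = v)" if l: "length v = Suc n" for v
  proof -
    have c: "\<sigma> (act_a v) = act_a (\<sigma> v)" using comm[OF l, of Ga] by simp
    show ?thesis
    proof (cases "\<sigma> v = v")
      case True then show ?thesis using c by simp
    next
      case False
      then have "\<sigma> v = flipl v" using fib[OF l] by simp
      then have "\<sigma> (act_a v) = flipl (act_a v)" using c act_flipl'[OF l, of Ga] by simp
      moreover have "flipl (act_a v) \<noteq> act_a v" using l by (intro flipl_neq) (metis len_act_a list.size(3) nat.simps(3))
      ultimately show ?thesis using False by simp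
    qed
  qed
  have iter: "(\<sigma> ((act_a ^^ k) v) = (act_a ^^ k) v) \<longleftrightarrow> (\<sigma> v = v)" if l: "length v = Suc n" for v k
  proof (induction k)
    case 0 then show ?case by simp
  next
    case (Suc k)
    have "length ((act_a ^^ k) v) = Suc n" using l by simp
    from step[OF this] Suc show ?case by simp
  qed
  define v0 where "v0 = replicate (Suc n) False"
  have lv0: "length v0 = Suc n" by (simp add: v0_def)
  have all: "(\<sigma> v = v) \<longleftrightarrow> (\<sigma> v0 = v0)" if l: "length v = Suc n" for v
  proof -
    obtain k where "(act_a ^^ k) v0 = v" using trans_a[of v0 v] l lv0 by auto
    then show ?thesis using iter[OF lv0, of k] by simp
  qed
  show ?thesis
  proof (cases "\<sigma> v0 = v0")
    case True
    have s: "\<sigma> = restrict id ?V"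
    proof
      fix v show "\<sigma> v = restrict id ?V v"
        using all[of v] True es by (cases "length v = Suc n") (auto simp: extensional_def)
    qed
    have t: "\<tau> = restrict id ?D"
    proof
      fix d :: "(bool list \<times> gen) \<times> bool"
      obtain w s b where e: "d = ((w, s), b)" by (metis prod.exhaust)
      show "\<tau> d = restrict id ?D d"
      proof (cases "length w = Suc n")
        case True
        then show ?thesis using e tT tF s by (cases b) auto
      next
        case False
        then show ?thesis using e et by (auto simp: extensional_def)
      qed
    qed
    show ?thesis using s t by (simp add: D0_def)
  next
    case False
    have fl: "\<sigma> v = flipl v" if "length v = Suc n" for v
      using all[OF that] False fib[OF that] by auto
    have s: "\<sigma> = restrict flipl ?V"
    proof
      fix v show "\<sigma> v = restrict flipl ?V v"
        using fl[of v] es by (cases "length v = Suc n") (auto simp: extensional_def)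
    qed
    have t: "\<tau> = restrict fd ?D"
    proof
      fix d :: "(bool list \<times> gen) \<times> bool"
      obtain w s b where e: "d = ((w, s), b)" by (metis prod.exhaust)
      show "\<tau> d = restrict fd ?D d"
      proof (cases "length w = Suc n")
        case True
        then show ?thesis using e tT tF fl by (cases b) auto
      next
        case False
        then show ?thesis using e et by (auto simp: extensional_def)
      qed
    qed
    show ?thesis using s t by (simp add: D1_def)
  qed
qed


lemma D01_neq: "D0 n \<noteq> D1 n"
proof
  assume "D0 n = D1 n"
  then have "fst (D0 n) (replicate (Suc n) False) = fst (D1 n) (replicate (Suc n) False)" by simp
  then have "replicate (Suc n) False = flipl (replicate (Suc n) False)"
    by (simp add: D0_def D1_def)
  then show False using flipl_neq[of "replicate (Suc n) False"] by simp
qed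

lemma deck_eq: "deck_transformations (schreier (Suc n)) (proj_v n) (proj_d n) = {D0 n, D1 n}"
  using deck_sub D0_in D1_in by auto

lemma card_deck: "card (deck_transformations (schreier (Suc n)) (proj_v n) (proj_d n)) = 2"
  using D01_neq by (simp add: deck_eq)

lemma sheeted2: "sheeted 2 (schreier (Suc n)) (schreier n) (proj_v n)"
  unfolding sheeted_def
proof
  fix u assume "u \<in> gverts (schreier n)"
  then have lu: "length u = n" by simp
  have "{v \<in> gverts (schreier (Suc n)). proj_v n v = u} = {u @ [False], u @ [True]}"
  proof
    show "{v \<in> gverts (schreier (Suc n)). proj_v n v = u} \<subseteq> {u @ [False], u @ [True]}"
    proof
      fix v assume "v \<in> {v \<in> gverts (schreier (Suc n)). proj_v n v = u}"
      then have lv: "length v = Suc n" and t: "take n v = u" by (auto simp: proj_v_def)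
      have "v = u @ [False] \<or> v = flipl (u @ [False])"
        using fiber[of "u @ [False]" n v] lv t lu by simp
      then show "v \<in> {u @ [False], u @ [True]}" by auto
    qed
    show "{u @ [False], u @ [True]} \<subseteq> {v \<in> gverts (schreier (Suc n)). proj_v n v = u}"
      using lu by (auto simp: proj_v_def)
  qed
  then show "card {v \<in> gverts (schreier (Suc n)). proj_v n v = u} = 2" by simp
qed

lemma group2:
  fixes G (structure)
  assumes c: "carrier G = {e, f}" and o: "one G = e"
    and m: "e \<otimes> e = e" "e \<otimes> f = f" "f \<otimes> e = f" "f \<otimes> f = e"
  shows "group G"
  by (rule groupI) (auto simp: c o m)

lemma iso2:
  fixes G (structure)
  assumes c: "carrier G = {e, f}" and o: "one G = e" and ne: "e \<noteq> f"
    and m: "e \<otimes> e = e" "e \<otimes> f = f" "f \<otimes> e = f" "f \<otimes> f = e"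
  shows "G \<cong> integer_mod_group 2"
proof -
  let ?h = "\<lambda>x. if x = e then (0::int) else 1"
  have c2: "carrier (integer_mod_group 2) = {0, 1}"
    by (auto simp: carrier_integer_mod_group)
  have "?h \<in> hom G (integer_mod_group 2)"
    unfolding hom_def using ne by (auto simp: c c2 m)
  moreover have "bij_betw ?h (carrier G) (carrier (integer_mod_group 2))"
    unfolding bij_betw_def inj_on_def using ne by (auto simp: c c2)
  ultimately show ?thesis unfolding is_iso_def iso_def by blast
qed

lemma gal_facts:
  "carrier (galois_group (schreier (Suc n)) (proj_v n) (proj_d n)) = {D0 n, D1 n}"
  "one (galois_group (schreier (Suc n)) (proj_v n) (proj_d n)) = D0 n"
  "mult (galois_group (schreier (Suc n)) (proj_v n) (proj_d n)) (D0 n) (D0 n) = D0 n"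
  "mult (galois_group (schreier (Suc n)) (proj_v n) (proj_d n)) (D0 n) (D1 n) = D1 n"
  "mult (galois_group (schreier (Suc n)) (proj_v n) (proj_d n)) (D1 n) (D0 n) = D1 n"
  "mult (galois_group (schreier (Suc n)) (proj_v n) (proj_d n)) (D1 n) (D1 n) = D0 n"
  by (auto simp: galois_group_def deck_eq D0_def D1_def compose_def fun_eq_iff)

theorem proposition6p1:
  shows "(\<forall>m n. 1 \<le> n \<and> n < m \<longrightarrow>
            unramified_covering (schreier m) (schreier n) (proj_v n) (proj_d n))
       \<and> (\<forall>n. 1 \<le> n \<longrightarrow>
            normal_covering 2 (schreier (Suc n)) (schreier n) (proj_v n) (proj_d n)
            \<and> group (galois_group (schreier (Suc n)) (proj_v n) (proj_d n))
            \<and> galois_group (schreier (Suc n)) (proj_v n) (proj_d n) \<cong> integer_mod_group 2)"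
proof (intro conjI allI impI)
  fix m n :: nat assume "1 \<le> n \<and> n < m"
  then show "unramified_covering (schreier m) (schreier n) (proj_v n) (proj_d n)"
    by (intro covering) simp
next
  fix n :: nat
  show "normal_covering 2 (schreier (Suc n)) (schreier n) (proj_v n) (proj_d n)"
    unfolding normal_covering_def using covering[of n "Suc n"] sheeted2 card_deck by simp
  show "group (galois_group (schreier (Suc n)) (proj_v n) (proj_d n))"
    by (rule group2[OF gal_facts])
  show "galois_group (schreier (Suc n)) (proj_v n) (proj_d n) \<cong> integer_mod_group 2"
    by (rule iso2[OF gal_facts(1,2) D01_neq gal_facts(3-6)])
qed

end
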